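(* Let $n$ be a positive integer and let $$A_n' := \{(0,S_1,\dots,S_{2n}) \in \mathbb{Z}^{2n+1} : |S_i - S_{i-1}| = 1 \text{ for } 1\le i\le 2n \ (S_0=0),\ S_1>0,\ S_{2n}=0\},$$ $$B_n' := \{(0,S_1,\dots,S_{2n}) \in \mathbb{Z}^{2n+1} : |S_i - S_{i-1}| = 1 \text{ for } 1\le i\le 2n \ (S_0=0),\ S_i>0 \text{ for all } 1\le i\le 2n\}.$$ For $(0,S_1,\dots,S_{2n})\in A_n'$, let $M:=\max\{S_1,\dots,S_{2n}\}$, let $a_M:=\min\{1\le i\le 2n: S_i=M\}$, $b_0:=0$, and for $k=M-1,M-2,\dots,1$ define inductively $$a_k:=\min\{1\le i\le a_{k+1}: S_i=k\},\qquad b_k:=\max\{1\le i\le a_{k+1}: S_i=k\}.$$ For $\ell=1,\dots,2n$ define $$T_\ell:=\begin{cases}2m-S_\ell & \text{if } a_m\le \ell\le b_m \text{ for some } m\in\{1,\dots,M-1\},\\ 2M-S_\ell & \text{if } \ell\ge a_M,\end{cases}$$ and let $\Phi_1(0,S_1,\dots,S_{2n}):=(0,T_1,\dots,T_{2n})$. Then $\Phi_1$ is a well-defined map from $A_n'$ to $B_n'$ and it is a bijection between $A_n'$ and $B_n'$.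
   Context: These are paths of the $2n$-step simple random walk on $\mathbb{Z}$ started at the origin: $A_n'$ consists of paths whose first step is up and which end at $0$; $B_n'$ consists of paths staying strictly positive at all times $1,\dots,2n$. *)

theory Defs
  imports Main
begin

text \<open>A path (0,S_1,...,S_2n) is an int list of length 2n+1; entry i is S_i.\<close>

definition walk_path :: "nat \<Rightarrow> int list \<Rightarrow> bool" where
  "walk_path n S \<longleftrightarrow> length S = 2*n + 1 \<and> S!0 = 0 \<and>
     (\<forall>i\<in>{1..2*n}. \<bar>S!i - S!(i-1)\<bar> = 1)"

definition A' :: "nat \<Rightarrow> int list set" where
  "A' n = {S. walk_path n S \<and> S!1 > 0 \<and> S!(2*n) = 0}"

definition B' :: "nat \<Rightarrow> int list set" where
  "B' n = {S. walk_path n S \<and> (\<forall>i\<in>{1..2*n}. S!i > 0)}"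

definition maxh :: "nat \<Rightarrow> int list \<Rightarrow> int" where
  "maxh n S = Max ((\<lambda>i. S!i) ` {1..2*n})"

text \<open>aseq n S j = a_{M-j}, defined by downward recursion from a_M.\<close>
fun aseq :: "nat \<Rightarrow> int list \<Rightarrow> nat \<Rightarrow> nat" where
  "aseq n S 0 = (LEAST i. 1 \<le> i \<and> i \<le> 2*n \<and> S!i = maxh n S)"
| "aseq n S (Suc j) =
     (LEAST i. 1 \<le> i \<and> i \<le> aseq n S j \<and> S!i = maxh n S - int (Suc j))"

definition apt :: "nat \<Rightarrow> int list \<Rightarrow> int \<Rightarrow> nat" where
  "apt n S k = aseq n S (nat (maxh n S - k))"

definition bpt :: "nat \<Rightarrow> int list \<Rightarrow> int \<Rightarrow> nat" where
  "bpt n S k = (GREATEST i. 1 \<le> i \<and> i \<le> apt n S (k+1) \<and> S!i = k)"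

definition in_case :: "nat \<Rightarrow> int list \<Rightarrow> int \<Rightarrow> nat \<Rightarrow> bool" where
  "in_case n S m l \<longleftrightarrow>
     (1 \<le> m \<and> m \<le> maxh n S - 1 \<and> apt n S m \<le> l \<and> l \<le> bpt n S m) \<or>
     (m = maxh n S \<and> apt n S m \<le> l)"

definition Phi1 :: "nat \<Rightarrow> int list \<Rightarrow> int list" where
  "Phi1 n S = 0 # map (\<lambda>l. 2 * (THE m. in_case n S m l) - S!l) [1..<2*n+1]"

end

theory Submission
  imports Defs
begin

lemma walk_step:
  assumes "walk_path n S" "i < 2*n"
  shows "\<bar>S!(Suc i) - S!i\<bar> = 1"
proof -
  from assms(1) have h: "\<forall>i\<in>{1..2*n}. \<bar>S!i - S!(i-1)\<bar> = 1" by (simp add: walk_path_def)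
  have "Suc i \<in> {1..2*n}" using assms(2) by auto
  from bspec[OF h this] show ?thesis by simp
qed

lemma ivt_up:
  fixes f :: "nat \<Rightarrow> int"
  assumes "\<forall>i. a \<le> i \<and> i < b \<longrightarrow> \<bar>f (Suc i) - f i\<bar> \<le> 1" "a \<le> b" "f a \<le> v" "v \<le> f b"
  shows "\<exists>i\<in>{a..b}. f i = v"
  using assms
proof (induction b)
  case 0
  then show ?case by auto
next
  case (Suc b)
  show ?case
  proof (cases "a = Suc b")
    case True
    then show ?thesis using Suc.prems by auto
  next
    case False
    then have ab: "a \<le> b" using Suc.prems by auto
    show ?thesis
    proof (cases "v \<le> f b")
      case True
      then obtain i where "i\<in>{a..b}" "f i = v" using Suc.IH Suc.prems ab by auto
      then show ?thesis by auto
    next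
      case False
      have "\<bar>f (Suc b) - f b\<bar> \<le> 1" using Suc.prems ab by auto
      then have "f (Suc b) = v" using False Suc.prems by auto
      then show ?thesis using Suc.prems by auto
    qed
  qed
qed

lemma last_cross:
  fixes f :: "nat \<Rightarrow> int"
  assumes "\<forall>i<l. \<bar>f (Suc i) - f i\<bar> \<le> 1" "f 0 < v" "v \<le> f l"
  shows "\<exists>i\<le>l. f i = v \<and> (\<forall>j. i < j \<and> j \<le> l \<longrightarrow> v < f j)"
  using assms
proof (induction l)
  case 0
  then show ?case by auto
next
  case (Suc l)
  show ?case
  proof (cases "f (Suc l) = v")
    case True
    then show ?thesis by auto
  next
    case False
    have "\<bar>f (Suc l) - f l\<bar> \<le> 1" using Suc.prems by auto
    then have "v \<le> f l" using False Suc.prems by auto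
    then obtain i where i: "i \<le> l" "f i = v" "\<forall>j. i < j \<and> j \<le> l \<longrightarrow> v < f j"
      using Suc.IH Suc.prems by auto
    have "\<forall>j. i < j \<and> j \<le> Suc l \<longrightarrow> v < f j"
      using i False Suc.prems(3) by (metis le_Suc_eq order_le_less)
    then show ?thesis using i by (intro exI[of _ i]) auto
  qed
qed

definition Rm :: "int list \<Rightarrow> nat \<Rightarrow> int" where
  "Rm S l = Max ((\<lambda>i. S!i) ` {1..l})"

lemma Rm_ge_iff: "1 \<le> l \<Longrightarrow> m \<le> Rm S l \<longleftrightarrow> (\<exists>i\<in>{1..l}. m \<le> S!i)"
  unfolding Rm_def by (subst Max_ge_iff) auto

lemma Rm_le_iff: "1 \<le> l \<Longrightarrow> Rm S l \<le> m \<longleftrightarrow> (\<forall>i\<in>{1..l}. S!i \<le> m)"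
  unfolding Rm_def by (subst Max_le_iff) auto

lemma Rm_ge: "1 \<le> i \<Longrightarrow> i \<le> l \<Longrightarrow> S!i \<le> Rm S l"
  using Rm_ge_iff[of l "S!i" S] by auto

lemma Rm_mono: "1 \<le> i \<Longrightarrow> i \<le> l \<Longrightarrow> Rm S i \<le> Rm S l"
  using Rm_le_iff[of i S "Rm S l"] Rm_ge[of _ l S] by auto

lemma Rm_Suc: "1 \<le> l \<Longrightarrow> Rm S (Suc l) = max (Rm S l) (S!Suc l)"
proof -
  assume l: "1 \<le> l"
  have "{1..Suc l} = insert (Suc l) {1..l}" by auto
  then show ?thesis using l unfolding Rm_def by (simp add: max.commute)
qed

lemma maxh_Rm: "maxh n S = Rm S (2*n)"
  by (simp add: maxh_def Rm_def)

definition fh :: "nat \<Rightarrow> int list \<Rightarrow> int \<Rightarrow> nat" where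
  "fh n S k = (LEAST i. 1 \<le> i \<and> i \<le> 2*n \<and> S!i = k)"

definition Pit :: "nat \<Rightarrow> int list \<Rightarrow> int list" where
  "Pit n S = 0 # map (\<lambda>l. 2 * Rm S l - S!l) [1..<2*n+1]"

definition Jm :: "nat \<Rightarrow> int list \<Rightarrow> nat \<Rightarrow> int" where
  "Jm n T l = Min ((\<lambda>i. T!i) ` {l..2*n})"

definition Qit :: "nat \<Rightarrow> int list \<Rightarrow> int list" where
  "Qit n T = 0 # map (\<lambda>l. 2 * min (Jm n T l) (T!(2*n) div 2) - T!l) [1..<2*n+1]"

lemma nth_list0: "1 \<le> l \<Longrightarrow> l \<le> 2*n \<Longrightarrow> ((0::int) # map f [1..<2*n+1]) ! l = f l"
  by (cases l) (simp_all del: upt_Suc add: nth_map nth_upt)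

lemma Pit_nth: "1 \<le> l \<Longrightarrow> l \<le> 2*n \<Longrightarrow> Pit n S ! l = 2 * Rm S l - S!l"
  unfolding Pit_def by (rule nth_list0)

lemma Qit_nth: "1 \<le> l \<Longrightarrow> l \<le> 2*n \<Longrightarrow> Qit n T ! l = 2 * min (Jm n T l) (T!(2*n) div 2) - T!l"
  unfolding Qit_def by (rule nth_list0)

lemma Jm_ge_iff: "l \<le> 2*n \<Longrightarrow> v \<le> Jm n T l \<longleftrightarrow> (\<forall>i\<in>{l..2*n}. v \<le> T!i)"
  unfolding Jm_def by (subst Min_ge_iff) auto

lemma Jm_le_iff: "l \<le> 2*n \<Longrightarrow> Jm n T l \<le> v \<longleftrightarrow> (\<exists>i\<in>{l..2*n}. T!i \<le> v)"
  unfolding Jm_def by (subst Min_le_iff) auto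

lemma Jm_le: "l \<le> j \<Longrightarrow> j \<le> 2*n \<Longrightarrow> Jm n T l \<le> T!j"
  using Jm_le_iff[of l n T "T!j"] by auto

lemma Jm_mono: "i \<le> l \<Longrightarrow> l \<le> 2*n \<Longrightarrow> Jm n T i \<le> Jm n T l"
  using Jm_le_iff[of l n T "Jm n T l"] Jm_le_iff[of i n T "Jm n T l"] by auto

lemma Jm_Suc: "l < 2*n \<Longrightarrow> Jm n T l = min (T!l) (Jm n T (Suc l))"
proof -
  assume l: "l < 2*n"
  have "{l..2*n} = insert l {Suc l..2*n}" using l by auto
  then show ?thesis using l unfolding Jm_def by simp
qed

lemma Jm_last: "Jm n T (2*n) = T!(2*n)"
  unfolding Jm_def by simp

lemma arithP: "\<bar>b - a\<bar> = 1 \<Longrightarrow> a \<le> r \<Longrightarrow> \<bar>(2*max r b - b) - (2*r - a)\<bar> = (1::int)"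
  by (cases "r \<le> b"; cases "b < a"; cases "r = a"; simp add: max_def abs_if)

lemma arithQ: "\<bar>b - a\<bar> = 1 \<Longrightarrow> j \<le> b \<Longrightarrow> \<bar>(2*min j N - b) - (2*min (min a j) N - a)\<bar> = (1::int)"
  by (cases "j \<le> N"; cases "a \<le> j"; cases "j = a"; cases "a \<le> N"; cases "b < a"; simp add: min_def abs_if)

context
  fixes n :: nat and S :: "int list"
  assumes SA: "S \<in> A' n" and npos: "n > 0"
begin

lemma SW: "walk_path n S" using SA by (simp add: A'_def)

lemma S1: "S!1 = 1"
proof -
  have "\<bar>S!(Suc 0) - S!0\<bar> = 1" using walk_step[OF SW] npos by auto
  moreover have "S!0 = 0" "S!1 > 0" using SA by (auto simp: A'_def walk_path_def)
  ultimately show ?thesis by simp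
qed

lemma S2n: "S!(2*n) = 0" using SA by (simp add: A'_def)

lemma hit:
  assumes "1 \<le> l" "l \<le> 2*n" "1 \<le> m" "m \<le> Rm S l"
  shows "\<exists>i\<in>{1..l}. S!i = m"
proof -
  obtain i where i: "i\<in>{1..l}" "m \<le> S!i" using Rm_ge_iff assms by blast
  have "\<exists>j\<in>{1..i}. S!j = m"
    apply (rule ivt_up[where f="\<lambda>j. S!j"])
    using walk_step[OF SW] i assms S1 by auto
  then show ?thesis using i by auto
qed

lemma fh_props:
  assumes "1 \<le> m" "m \<le> maxh n S"
  shows "1 \<le> fh n S m \<and> fh n S m \<le> 2*n \<and> S!(fh n S m) = m"
proof -
  have "\<exists>i\<in>{1..2*n}. S!i = m" using hit[of "2*n" m] assms npos by (auto simp: maxh_Rm)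
  then have "\<exists>i. 1 \<le> i \<and> i \<le> 2*n \<and> S!i = m" by auto
  from LeastI_ex[OF this] show ?thesis unfolding fh_def .
qed

lemma fh_le_iff:
  assumes "1 \<le> m" "m \<le> maxh n S" "1 \<le> l" "l \<le> 2*n"
  shows "fh n S m \<le> l \<longleftrightarrow> m \<le> Rm S l"
proof
  assume "fh n S m \<le> l"
  then show "m \<le> Rm S l" using fh_props[OF assms(1,2)] Rm_ge[of "fh n S m" l S] by auto
next
  assume "m \<le> Rm S l"
  then obtain i where i: "i\<in>{1..l}" "S!i = m" using hit assms by blast
  then have "fh n S m \<le> i" unfolding fh_def using assms by (intro Least_le) auto
  then show "fh n S m \<le> l" using i by auto
qed

lemma R_bounds:
  assumes "1 \<le> l" "l \<le> 2*n"
  shows "1 \<le> Rm S l \<and> Rm S l \<le> maxh n S"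
  using Rm_ge[of 1 l S] S1 assms Rm_mono[of l "2*n" S] by (auto simp: maxh_Rm)

lemma aseq_fh: "int j < maxh n S \<Longrightarrow> aseq n S j = fh n S (maxh n S - int j)"
proof (induction j)
  case 0
  then show ?case by (simp add: fh_def)
next
  case (Suc j)
  define k where "k = maxh n S - int (Suc j)"
  have k1: "1 \<le> k" using Suc.prems k_def by auto
  have km: "k + 1 \<le> maxh n S" using k_def by auto
  have IH: "aseq n S j = fh n S (k+1)" using Suc k_def by auto
  have f1: "1 \<le> fh n S (k+1) \<and> fh n S (k+1) \<le> 2*n \<and> S!(fh n S (k+1)) = k+1"
    using fh_props[of "k+1"] k1 km by auto
  have f0: "1 \<le> fh n S k \<and> fh n S k \<le> 2*n \<and> S!(fh n S k) = k"
    using fh_props[of "k"] k1 km by auto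
  have "k+1 \<le> Rm S (fh n S (k+1))" using fh_le_iff[of "k+1" "fh n S (k+1)"] f1 k1 km by auto
  then have "fh n S k \<le> fh n S (k+1)" using fh_le_iff[of "k" "fh n S (k+1)"] f1 k1 km by auto
  have "aseq n S (Suc j) = (LEAST i. 1 \<le> i \<and> i \<le> fh n S (k+1) \<and> S!i = k)"
    using IH k_def by simp
  also have "\<dots> = fh n S k"
  proof (rule Least_equality)
    show "1 \<le> fh n S k \<and> fh n S k \<le> fh n S (k + 1) \<and> S ! fh n S k = k"
      using f0 \<open>fh n S k \<le> fh n S (k+1)\<close> by auto
  next
    fix y assume "1 \<le> y \<and> y \<le> fh n S (k + 1) \<and> S ! y = k"
    with f1 have "1 \<le> y \<and> y \<le> 2*n \<and> S!y = k" by auto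
    then show "fh n S k \<le> y" unfolding fh_def by (rule Least_le)
  qed
  finally show ?case using k_def by simp
qed

lemma apt_fh: "1 \<le> k \<Longrightarrow> k \<le> maxh n S \<Longrightarrow> apt n S k = fh n S k"
  unfolding apt_def using aseq_fh[of "nat (maxh n S - k)"] by auto

lemma bpt_fh:
  assumes "1 \<le> k" "k \<le> maxh n S - 1"
  shows "bpt n S k = fh n S (k+1) - 1"
proof -
  define f where "f = fh n S (k+1)"
  have f1: "1 \<le> f \<and> f \<le> 2*n \<and> S!f = k+1" using fh_props[of "k+1"] assms f_def by auto
  have "f \<noteq> 1" using f1 S1 assms by auto
  then have f2: "2 \<le> f" using f1 by auto
  have "\<not> f \<le> f - 1" using f2 by auto
  then have "\<not> k+1 \<le> Rm S (f-1)" using fh_le_iff[of "k+1" "f-1"] f1 f2 assms f_def by auto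
  moreover have "S!(f-1) \<le> Rm S (f-1)" using Rm_ge[of "f-1" "f-1" S] f2 by auto
  ultimately have "S!(f-1) \<le> k" by linarith
  moreover have "\<bar>S!(Suc (f-1)) - S!(f-1)\<bar> = 1" using walk_step[OF SW, of "f-1"] f1 f2 by auto
  ultimately have sf: "S!(f-1) = k" using f1 f2 by auto
  have "bpt n S k = (GREATEST i. 1 \<le> i \<and> i \<le> f \<and> S!i = k)"
    unfolding bpt_def f_def using apt_fh[of "k+1"] assms by auto
  also have "\<dots> = f - 1"
  proof (rule Greatest_equality)
    show "1 \<le> f - 1 \<and> f - 1 \<le> f \<and> S ! (f - 1) = k" using sf f2 by auto
  next
    fix y assume "1 \<le> y \<and> y \<le> f \<and> S ! y = k"
    moreover have "y \<noteq> f" using calculation f1 by auto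
    ultimately show "y \<le> f - 1" by auto
  qed
  finally show ?thesis using f_def by simp
qed

lemma in_case_iff:
  assumes "1 \<le> l" "l \<le> 2*n"
  shows "in_case n S m l \<longleftrightarrow> m = Rm S l"
proof -
  define M where "M = maxh n S"
  have RB: "1 \<le> Rm S l" "Rm S l \<le> M" using R_bounds assms M_def by auto
  have c1: "(1 \<le> m \<and> m \<le> M - 1 \<and> apt n S m \<le> l \<and> l \<le> bpt n S m) \<longleftrightarrow>
            (1 \<le> m \<and> m \<le> M - 1 \<and> m = Rm S l)"
  proof (cases "1 \<le> m \<and> m \<le> M - 1")
    case True
    have a: "apt n S m \<le> l \<longleftrightarrow> m \<le> Rm S l"
      using apt_fh[of m] fh_le_iff[of m l] True assms M_def by auto
    have f1: "1 \<le> fh n S (m+1)" using fh_props[of "m+1"] True M_def by auto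
    have "l \<le> bpt n S m \<longleftrightarrow> l < fh n S (m+1)" using bpt_fh[of m] True M_def f1 by auto
    also have "\<dots> \<longleftrightarrow> \<not> m + 1 \<le> Rm S l" using fh_le_iff[of "m+1" l] True assms M_def by auto
    finally show ?thesis using a True by auto
  next
    case False
    then show ?thesis by auto
  qed
  have c2: "(m = M \<and> apt n S m \<le> l) \<longleftrightarrow> (m = M \<and> m = Rm S l)"
    using apt_fh[of M] fh_le_iff[of M l] RB assms M_def by auto
  show ?thesis unfolding in_case_def M_def[symmetric] c1 c2 using RB by auto
qed

lemma Phi1_Pit: "Phi1 n S = Pit n S"
  unfolding Phi1_def Pit_def
proof (rule arg_cong[where f="\<lambda>x. 0 # x"], rule map_cong[OF refl])
  fix l assume "l \<in> set [1..<2*n+1]"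
  then have l: "1 \<le> l" "l \<le> 2*n" by auto
  have "(THE m. in_case n S m l) = Rm S l"
    using in_case_iff[OF l] by auto
  then show "2 * (THE m. in_case n S m l) - S ! l = 2 * Rm S l - S ! l" by simp
qed

lemma R1: "Rm S 1 = 1" unfolding Rm_def using S1 by simp

lemma Pit_B: "Pit n S \<in> B' n"
proof -
  have len: "length (Pit n S) = 2*n+1" by (simp del: upt_Suc add: Pit_def)
  have p0: "Pit n S ! 0 = 0" by (simp del: upt_Suc add: Pit_def)
  have steps: "\<bar>Pit n S ! i - Pit n S ! (i-1)\<bar> = 1" if i: "i \<in> {1..2*n}" for i
  proof (cases "i = 1")
    case True
    then show ?thesis using p0 Pit_nth[of 1 n S] R1 S1 npos by simp
  next
    case False
    then obtain j where j: "i = Suc j" "1 \<le> j" using i by (cases i) auto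
    have "Pit n S ! i = 2 * max (Rm S j) (S!Suc j) - S!Suc j"
      using Pit_nth[of i n S] Rm_Suc[of j S] i j by auto
    moreover have "Pit n S ! (i-1) = 2 * Rm S j - S!j" using Pit_nth[of j n S] i j by auto
    moreover have "\<bar>S!Suc j - S!j\<bar> = 1" using walk_step[OF SW, of j] i j by auto
    moreover have "S!j \<le> Rm S j" using Rm_ge[of j j S] j by auto
    ultimately show ?thesis using arithP by simp
  qed
  have pos: "Pit n S ! i > 0" if i: "i \<in> {1..2*n}" for i
    using Pit_nth[of i n S] R_bounds[of i] Rm_ge[of i i S] i by auto
  show ?thesis unfolding B'_def walk_path_def using len p0 steps pos by auto
qed

lemma QP: "Qit n (Pit n S) = S"
proof -
  define T where "T = Pit n S"
  define M where "M = maxh n S"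
  have T2n: "T!(2*n) div 2 = M" using Pit_nth[of "2*n" n S] npos S2n unfolding T_def M_def maxh_Rm by simp
  have key: "min (Jm n T l) M = Rm S l" if l: "1 \<le> l" "l \<le> 2*n" for l
  proof -
    have RB: "1 \<le> Rm S l" "Rm S l \<le> M" using R_bounds[OF l] M_def by auto
    have lowJ: "Rm S l \<le> Jm n T l"
    proof (subst Jm_ge_iff[OF l(2)], intro ballI)
      fix i assume i: "i \<in> {l..2*n}"
      have "Rm S l \<le> Rm S i" using Rm_mono[of l i S] l i by auto
      moreover have "S!i \<le> Rm S i" using Rm_ge[of i i S] l i by auto
      moreover have "T!i = 2 * Rm S i - S!i" using Pit_nth[of i n S] l i T_def by auto
      ultimately show "Rm S l \<le> T!i" by simp
    qed
    show ?thesis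
    proof (cases "Rm S l = M")
      case True
      then show ?thesis using lowJ by simp
    next
      case False
      then have lt: "Rm S l + 1 \<le> M" using RB by simp
      define a where "a = fh n S (Rm S l + 1)"
      have a1: "1 \<le> a \<and> a \<le> 2*n \<and> S!a = Rm S l + 1"
        using fh_props[of "Rm S l + 1"] lt RB M_def a_def by auto
      have "\<not> a \<le> l" using fh_le_iff[of "Rm S l + 1" l] lt RB l M_def a_def by auto
      then have al: "l < a" by simp
      have "\<not> a \<le> a - 1" using al by auto
      then have "\<not> Rm S l + 1 \<le> Rm S (a-1)"
        using fh_le_iff[of "Rm S l + 1" "a-1"] lt RB l al a1 M_def a_def by auto
      moreover have "Rm S l \<le> Rm S (a-1)" using Rm_mono[of l "a-1" S] l al by auto
      ultimately have Ra: "Rm S (a-1) = Rm S l" by simp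
      have "S!(a-1) \<le> Rm S (a-1)" using Rm_ge[of "a-1" "a-1" S] l al by auto
      moreover have "\<bar>S!(Suc (a-1)) - S!(a-1)\<bar> = 1" using walk_step[OF SW, of "a-1"] a1 al by auto
      ultimately have Sa: "S!(a-1) = Rm S l" using Ra a1 al by auto
      have "T!(a-1) = Rm S l" using Pit_nth[of "a-1" n S] Ra Sa l al a1 T_def by auto
      then have "Jm n T l \<le> Rm S l" using Jm_le[of l "a-1" n T] al a1 by auto
      then show ?thesis using lowJ RB by simp
    qed
  qed
  show ?thesis
  proof (rule nth_equalityI)
    show "length (Qit n (Pit n S)) = length S" using SW by (simp del: upt_Suc add: Qit_def walk_path_def)
  next
    fix i assume "i < length (Qit n (Pit n S))"
    then have i: "i \<le> 2*n" by (simp del: upt_Suc add: Qit_def)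
    show "Qit n (Pit n S) ! i = S ! i"
    proof (cases "i = 0")
      case True
      then show ?thesis using SW by (simp del: upt_Suc add: Qit_def walk_path_def)
    next
      case False
      then have i1: "1 \<le> i" by simp
      have "Qit n T ! i = 2 * Rm S i - T!i" using Qit_nth[OF i1 i, of T] T2n key[OF i1 i] by simp
      also have "\<dots> = S!i" using Pit_nth[OF i1 i, of S] T_def by simp
      finally show ?thesis using T_def by simp
    qed
  qed
qed

end

context
  fixes n :: nat and T :: "int list"
  assumes TB: "T \<in> B' n" and npos: "n > 0"
begin

lemma TW: "walk_path n T" using TB by (simp add: B'_def)

lemma T0: "T!0 = 0" using TW by (simp add: walk_path_def)

lemma Tpos: "1 \<le> i \<Longrightarrow> i \<le> 2*n \<Longrightarrow> T!i > 0" using TB by (auto simp: B'_def)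

lemma T1: "T!1 = 1"
  using walk_step[OF TW, of 0] npos T0 Tpos[of 1] by auto

lemma Tpar: "i \<le> 2*n \<Longrightarrow> even (T!i - int i)"
proof (induction i)
  case 0
  then show ?case using T0 by simp
next
  case (Suc i)
  then have e: "even (T!i - int i)" by simp
  have "\<bar>T!Suc i - T!i\<bar> = 1" using walk_step[OF TW, of i] Suc.prems by simp
  then have "T!Suc i = T!i + 1 \<or> T!Suc i = T!i - 1" by auto
  then show ?case
  proof
    assume "T!Suc i = T!i + 1" then show ?thesis using e by simp
  next
    assume h: "T!Suc i = T!i - 1"
    have "T!Suc i - int (Suc i) = (T!i - int i) - 2" using h by simp
    then show ?thesis using e by presburger
  qed
qed

definition NN where "NN = T!(2*n) div 2"

lemma NN2: "T!(2*n) = 2 * NN" using Tpar[of "2*n"] unfolding NN_def by auto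

lemma NN1: "1 \<le> NN" using NN2 Tpos[of "2*n"] npos by auto

lemma Jpos: assumes "1 \<le> l" "l \<le> 2*n" shows "1 \<le> Jm n T l"
proof -
  have "\<forall>i\<in>{l..2*n}. 1 \<le> T!i"
  proof
    fix i assume "i \<in> {l..2*n}"
    then have "0 < T!i" using Tpos assms by auto
    then show "1 \<le> T!i" by simp
  qed
  then show ?thesis using Jm_ge_iff[of l n 1 T] assms by simp
qed

lemma Qit_A: "Qit n T \<in> A' n"
proof -
  have len: "length (Qit n T) = 2*n+1" by (simp del: upt_Suc add: Qit_def)
  have q0: "Qit n T ! 0 = 0" by (simp del: upt_Suc add: Qit_def)
  have q1: "Qit n T ! 1 = 1"
    using Qit_nth[of 1 n T] npos Jm_le[of 1 1 n T] Jpos[of 1] T1 NN1 unfolding NN_def by auto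
  have steps: "\<bar>Qit n T ! i - Qit n T ! (i-1)\<bar> = 1" if i: "i \<in> {1..2*n}" for i
  proof (cases "i = 1")
    case True
    then show ?thesis using q0 q1 by simp
  next
    case False
    then obtain j where j: "i = Suc j" "1 \<le> j" using i by (cases i) auto
    have "Qit n T ! i = 2 * min (Jm n T (Suc j)) NN - T!Suc j"
      using Qit_nth[of i n T] i j unfolding NN_def by auto
    moreover have "Qit n T ! (i-1) = 2 * min (min (T!j) (Jm n T (Suc j))) NN - T!j"
      using Qit_nth[of j n T] Jm_Suc[of j n T] i j unfolding NN_def by auto
    moreover have "\<bar>T!Suc j - T!j\<bar> = 1" using walk_step[OF TW, of j] i j by auto
    moreover have "Jm n T (Suc j) \<le> T!Suc j" using Jm_le[of "Suc j" "Suc j" n T] i j by auto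
    ultimately show ?thesis using arithQ by simp
  qed
  have qe: "Qit n T ! (2*n) = 0"
    using Qit_nth[of "2*n" n T] npos Jm_last[of n T] NN2 NN1 unfolding NN_def by auto
  show ?thesis unfolding A'_def walk_path_def using len q0 q1 steps qe by auto
qed

lemma PQ: "Pit n (Qit n T) = T"
proof -
  define U where "U = Qit n T"
  define K where "K = (\<lambda>l. min (Jm n T l) NN)"
  have Un: "U!l = 2 * K l - T!l" if "1 \<le> l" "l \<le> 2*n" for l
    using Qit_nth[OF that, of T] unfolding U_def K_def NN_def by simp
  have RU: "Rm U l = K l" if l: "1 \<le> l" "l \<le> 2*n" for l
  proof (rule antisym)
    show "Rm U l \<le> K l"
    proof (subst Rm_le_iff[OF l(1)], intro ballI)
      fix i assume i: "i \<in> {1..l}"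
      have "K i \<le> K l" using Jm_mono[of i l n T] i l unfolding K_def by auto
      moreover have "K i \<le> T!i" using Jm_le[of i i n T] i l unfolding K_def by auto
      ultimately show "U!i \<le> K l" using Un[of i] i l by auto
    qed
  next
    have Kl1: "1 \<le> K l" using Jpos[OF l] NN1 unfolding K_def by auto
    have KT: "K l \<le> T!l" using Jm_le[of l l n T] l unfolding K_def by auto
    obtain i where i: "i \<le> l" "T!i = K l" "\<forall>j. i < j \<and> j \<le> l \<longrightarrow> K l < T!j"
      using last_cross[of l "\<lambda>j. T!j" "K l"] walk_step[OF TW] l T0 Kl1 KT by force
    have i1: "1 \<le> i" using i T0 Kl1 by (cases i) auto
    have "K l \<le> Jm n T i"
    proof (subst Jm_ge_iff, use i l in simp, intro ballI)
      fix j assume j: "j \<in> {i..2*n}"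
      show "K l \<le> T!j"
      proof (cases "j \<le> l")
        case True
        show ?thesis
        proof (cases "j = i")
          case True then show ?thesis using i by simp
        next
          case False
          then have "i < j" using j by simp
          then show ?thesis using i(3) \<open>j \<le> l\<close> by auto
        qed
      next
        case False
        then have "Jm n T l \<le> T!j" using Jm_le[of l j n T] j by auto
        then show ?thesis unfolding K_def by linarith
      qed
    qed
    moreover have "Jm n T i \<le> K l" using Jm_le[of i i n T] i l by auto
    ultimately have "K i = K l" unfolding K_def by (simp add: min_def)
    then have "U!i = K l" using Un[of i] i i1 l by auto
    then show "K l \<le> Rm U l" using Rm_ge[of i l U] i i1 by auto
  qed
  show ?thesis
  proof (rule nth_equalityI)
    show "length (Pit n (Qit n T)) = length T" using TW by (simp del: upt_Suc add: Pit_def walk_path_def)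
  next
    fix i assume "i < length (Pit n (Qit n T))"
    then have i: "i \<le> 2*n" by (simp del: upt_Suc add: Pit_def)
    show "Pit n (Qit n T) ! i = T ! i"
    proof (cases "i = 0")
      case True
      then show ?thesis using T0 by (simp del: upt_Suc add: Pit_def)
    next
      case False
      then have i1: "1 \<le> i" by simp
      show ?thesis using Pit_nth[OF i1 i, of U] RU[OF i1 i] Un[OF i1 i] U_def by simp
    qed
  qed
qed

end

theorem theorem1:
  fixes n :: nat
  assumes "n > 0"
  shows "(\<forall>S\<in>A' n. \<forall>l\<in>{1..2*n}. \<exists>!m. in_case n S m l)
       \<and> Phi1 n ` A' n \<subseteq> B' n
       \<and> bij_betw (Phi1 n) (A' n) (B' n)"
proof (intro conjI)
  show "\<forall>S\<in>A' n. \<forall>l\<in>{1..2*n}. \<exists>!m. in_case n S m l"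
    using in_case_iff[OF _ assms] by auto
  show "Phi1 n ` A' n \<subseteq> B' n"
    using Phi1_Pit[OF _ assms] Pit_B[OF _ assms] by auto
  have "bij_betw (Pit n) (A' n) (B' n)"
    by (rule bij_betw_byWitness[where f'="Qit n"])
       (use QP[OF _ assms] PQ[OF _ assms] Pit_B[OF _ assms] Qit_A[OF _ assms] in auto)
  then show "bij_betw (Phi1 n) (A' n) (B' n)"
    using bij_betw_cong[of "A' n" "Phi1 n" "Pit n" "B' n"] Phi1_Pit[OF _ assms] by auto
qed

end
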